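(* Let $d\ge3$ and let $C$ be a $d$-dimensional Archimedean copula with generator $\psi$, pseudo-inverse $\varphi$ and Williamson measure $\gamma$. Then $\mu_C(L_t)=\gamma(\{1/\varphi(t)\})$ for every $t\in(0,1]$. If $C$ is strict then $\mu_C(L_0)=0$, and if $C$ is non-strict then $\mu_C(L_0)=\gamma(\{1/\varphi(0)\})$. Finally, the Kendall distribution function satisfies $F_K^d(t)=\gamma([0,1/\varphi(t)])$ for every $t\in(0,1]$.
   Context: An Archimedean generator is a continuous non-increasing $\psi:[0,\infty)\to[0,1]$ with $\psi(0)=1$, $\lim_{z\to\infty}\psi(z)=0$, strictly decreasing on $[0,\inf\{z:\psi(z)=0\}]$, normalized by $\psi(1)=1/2$; pseudo-inverse $\varphi(y)=\inf\{z\in[0,\infty]:\psi(z)=y\}$. $C(\mathbf{u})=\psi(\sum_{i=1}^d\varphi(u_i))$ is a $d$-dimensional Archimedean copula iff $(-1)^{d-2}\psi^{(d-2)}$ exists on $(0,\infty)$ and is non-negative, non-increasing and convex. $C$ is strict if $\varphi(0)=\infty$. The Williamson measure of $\psi$ is the unique probability measure $\gamma$ on $\mathcal{B}([0,\infty))$ with $\gamma(\{0\})=0$ and $\psi(z)=\int_{[0,\infty)}(1-tz)_+^{d-1}\,d\gamma(t)$ for $z>0$. $\mu_C$ is the probability measure on $[0,1]^d$ with distribution function $C$. Level sets: $L_t=\{\mathbf{u}\in[0,1]^d:C(\mathbf{u})=t\}$ for $t\in[0,1]$. The Kendall distribution function is $F_K^d(t)=\mu_C(\{\mathbf{u}:C(\mathbf{u})\le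 t\})$. Convention $1/0=\infty$ (so $F_K^d(1)=\gamma([0,\infty))$). *)

theory Defs
  imports "HOL-Probability.Probability"
begin

text \<open>Extension of a generator to [0,\<infinity>] by psi(\<infinity>) = lim psi = 0.\<close>
definition psi_ext :: "(real \<Rightarrow> real) \<Rightarrow> ereal \<Rightarrow> real" where
  "psi_ext psi z = (if z = \<infinity> then 0 else psi (real_of_ereal z))"

definition pseudo_inv :: "(real \<Rightarrow> real) \<Rightarrow> real \<Rightarrow> ereal" where
  "pseudo_inv psi y = Inf {z :: ereal. 0 \<le> z \<and> psi_ext psi z = y}"

text \<open>Archimedean generator (normalized by psi 1 = 1/2).\<close>
definition archimedean_generator :: "(real \<Rightarrow> real) \<Rightarrow> bool" where
  "archimedean_generator psi \<longleftrightarrow>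
     continuous_on {0..} psi \<and>
     (\<forall>z\<ge>0. 0 \<le> psi z \<and> psi z \<le> 1) \<and>
     (\<forall>x y. 0 \<le> x \<and> x \<le> y \<longrightarrow> psi y \<le> psi x) \<and>
     psi 0 = 1 \<and>
     (psi \<longlongrightarrow> 0) at_top \<and>
     (let z0 = Inf {z :: ereal. 0 \<le> z \<and> z \<noteq> \<infinity> \<and> psi (real_of_ereal z) = 0} in
        \<forall>x y. 0 \<le> x \<and> x < y \<and> ereal y \<le> z0 \<longrightarrow> psi y < psi x) \<and>
     psi 1 = 1 / 2"

definition arch_copula :: "(real \<Rightarrow> real) \<Rightarrow> real ^ 'n::finite \<Rightarrow> real" where
  "arch_copula psi u = psi_ext psi (\<Sum>i\<in>UNIV. pseudo_inv psi (u $ i))"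

definition unit_cube :: "(real ^ 'n::finite) set" where
  "unit_cube = {u. \<forall>i. 0 \<le> u $ i \<and> u $ i \<le> 1}"

definition williamson_measure :: "nat \<Rightarrow> (real \<Rightarrow> real) \<Rightarrow> real measure \<Rightarrow> bool" where
  "williamson_measure d psi \<gamma> \<longleftrightarrow>
     prob_space \<gamma> \<and> sets \<gamma> = sets borel \<and>
     emeasure \<gamma> {..<0} = 0 \<and> emeasure \<gamma> {0} = 0 \<and>
     (\<forall>z>0. psi z = (\<integral>t. (max 0 (1 - t * z)) ^ (d - 1) \<partial>\<gamma>))"

definition copula_measure :: "(real ^ 'n::finite \<Rightarrow> real) \<Rightarrow> (real ^ 'n) measure \<Rightarrow> bool" where
  "copula_measure C \<mu> \<longleftrightarrow>
     prob_space \<mu> \<and> sets \<mu> = sets borel \<and> emeasure \<mu> unit_cube = 1 \<and>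
     (\<forall>u\<in>unit_cube. measure \<mu> {x. \<forall>i. x $ i \<le> u $ i} = C u)"

definition level_set :: "(real ^ 'n::finite \<Rightarrow> real) \<Rightarrow> real \<Rightarrow> (real ^ 'n) set" where
  "level_set C t = {u \<in> unit_cube. C u = t}"

definition kendall_df :: "(real ^ 'n::finite \<Rightarrow> real) \<Rightarrow> (real ^ 'n) measure \<Rightarrow> real \<Rightarrow> real" where
  "kendall_df C \<mu> t = measure \<mu> {u \<in> unit_cube. C u \<le> t}"

end

theory Submission
  imports Defs
begin

lemma gen_props:
  assumes "archimedean_generator psi"
  shows gen_cont: "continuous_on {0..} psi"
    and gen_range: "\<And>z. z \<ge> 0 \<Longrightarrow> 0 \<le> psi z \<and> psi z \<le> 1"
    and gen_anti: "\<And>x y. 0 \<le> x \<Longrightarrow> x \<le> y \<Longrightarrow> psi y \<le> psi x"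
    and gen_0: "psi 0 = 1"
    and gen_lim: "(psi \<longlongrightarrow> 0) at_top"
  using assms unfolding archimedean_generator_def by auto

lemma gen_strict:
  assumes g: "archimedean_generator psi" and "0 \<le> x" "x < y" "psi y > 0"
  shows "psi y < psi x"
proof -
  define z0 where "z0 = Inf {z :: ereal. 0 \<le> z \<and> z \<noteq> \<infinity> \<and> psi (real_of_ereal z) = 0}"
  have st: "\<forall>x y. 0 \<le> x \<and> x < y \<and> ereal y \<le> z0 \<longrightarrow> psi y < psi x"
    using g unfolding archimedean_generator_def z0_def Let_def by blast
  have "ereal y \<le> z0" unfolding z0_def
  proof (rule Inf_greatest)
    fix z assume z: "z \<in> {z :: ereal. 0 \<le> z \<and> z \<noteq> \<infinity> \<and> psi (real_of_ereal z) = 0}"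
    then obtain r where r: "z = ereal r" "0 \<le> r" "psi r = 0"
      by (cases z) auto
    show "ereal y \<le> z"
    proof (rule ccontr)
      assume "\<not> ereal y \<le> z"
      then have "r \<le> y" using r by auto
      then have "psi y \<le> psi r" using gen_anti[OF g, of r y] r by auto
      then show False using r assms by auto
    qed
  qed
  then show ?thesis using st assms by auto
qed

lemma gen_uniq:
  assumes g: "archimedean_generator psi" and "0 \<le> x" "0 \<le> y" "psi x = psi y" "psi x > 0"
  shows "x = y"
  using gen_strict[OF g, of x y] gen_strict[OF g, of y x] assms by (cases x y rule: linorder_cases) auto

lemma gen_exists:
  assumes g: "archimedean_generator psi" and "0 < c" "c \<le> 1"
  shows "\<exists>z\<ge>0. psi z = c"
proof -
  have "eventually (\<lambda>x. psi x < c) at_top"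
    using gen_lim[OF g] assms(2) by (rule order_tendstoD)
  then obtain N where N: "\<And>x. x \<ge> N \<Longrightarrow> psi x < c" by (auto simp: eventually_at_top_linorder)
  define M where "M = max N 0"
  have "psi M < c" using N by (simp add: M_def)
  moreover have "continuous_on {0..M} psi"
    using gen_cont[OF g] by (rule continuous_on_subset) auto
  ultimately obtain z where "0 \<le> z" "z \<le> M" "psi z = c"
    using IVT2'[where f=psi and a=0 and b=M and y=c] gen_0[OF g] assms M_def by fastforce
  then show ?thesis by auto
qed

lemma pseudo_inv_nonneg: "0 \<le> pseudo_inv psi y"
  unfolding pseudo_inv_def by (rule Inf_greatest) auto

lemma pseudo_inv_pos:
  assumes g: "archimedean_generator psi" and "0 < c" "c \<le> 1" "0 \<le> z" "psi z = c"
  shows "pseudo_inv psi c = ereal z"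
proof -
  have "{w :: ereal. 0 \<le> w \<and> psi_ext psi w = c} = {ereal z}"
  proof (intro set_eqI iffI)
    fix w assume w: "w \<in> {w :: ereal. 0 \<le> w \<and> psi_ext psi w = c}"
    then have "w \<noteq> \<infinity>" using assms by (auto simp: psi_ext_def)
    then obtain r where r: "w = ereal r" "0 \<le> r" using w by (cases w) auto
    then have "psi r = c" using w by (simp add: psi_ext_def)
    then have "r = z" using gen_uniq[OF g, of r z] assms r by auto
    then show "w \<in> {ereal z}" using r by simp
  qed (use assms in \<open>auto simp: psi_ext_def\<close>)
  then show ?thesis unfolding pseudo_inv_def by simp
qed

lemma pseudo_inv_strict0:
  assumes "\<And>z. z \<ge> 0 \<Longrightarrow> psi z \<noteq> 0"
  shows "pseudo_inv psi 0 = \<infinity>"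
proof -
  have "{w :: ereal. 0 \<le> w \<and> psi_ext psi w = 0} = {\<infinity>}"
  proof (intro set_eqI iffI)
    fix w assume w: "w \<in> {w :: ereal. 0 \<le> w \<and> psi_ext psi w = 0}"
    show "w \<in> {\<infinity>}"
    proof (cases w)
      case (real r) then show ?thesis using w assms by (auto simp: psi_ext_def)
    qed (use w in auto)
  qed (auto simp: psi_ext_def)
  then show ?thesis unfolding pseudo_inv_def by simp
qed

lemma pseudo_inv_nonstrict0:
  assumes g: "archimedean_generator psi" and ex: "\<exists>z\<ge>0. psi z = 0"
  obtains z0 where "z0 > 0" "psi z0 = 0" "\<And>z. z \<ge> 0 \<Longrightarrow> psi z = 0 \<longleftrightarrow> z0 \<le> z"
    "pseudo_inv psi 0 = ereal z0"
proof -
  define Z where "Z = {z \<in> {0..}. psi z = 0}"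
  have cl: "closed Z" unfolding Z_def
    by (rule continuous_closed_preimage_constant[OF gen_cont[OF g]]) auto
  have ne: "Z \<noteq> {}" using ex by (auto simp: Z_def)
  have bdd: "bdd_below Z" unfolding Z_def by (rule bdd_belowI[of _ 0]) auto
  define z0 where "z0 = Inf Z"
  have z0Z: "z0 \<in> Z" using closed_contains_Inf[OF ne bdd cl] z0_def by simp
  have le: "\<And>z. z \<in> Z \<Longrightarrow> z0 \<le> z" unfolding z0_def using bdd by (simp add: cInf_lower)
  have z0pos: "z0 > 0" using z0Z gen_0[OF g] unfolding Z_def by (cases "z0 = 0") auto
  have zero: "\<And>z. z \<ge> 0 \<Longrightarrow> psi z = 0 \<longleftrightarrow> z0 \<le> z"
  proof
    fix z :: real assume "z \<ge> 0" "psi z = 0" then show "z0 \<le> z" using le Z_def by auto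
  next
    fix z :: real assume "z \<ge> 0" "z0 \<le> z"
    then have "psi z \<le> psi z0" using gen_anti[OF g, of z0 z] z0pos by auto
    then show "psi z = 0" using z0Z gen_range[OF g, of z] \<open>z \<ge> 0\<close> Z_def by auto
  qed
  have "pseudo_inv psi 0 = ereal z0"
    unfolding pseudo_inv_def
  proof (rule cInf_eq_minimum)
    show "ereal z0 \<in> {z. 0 \<le> z \<and> psi_ext psi z = 0}"
      using z0Z z0pos by (auto simp: psi_ext_def Z_def)
  next
    fix w assume w: "w \<in> {z. 0 \<le> z \<and> psi_ext psi z = 0}"
    show "ereal z0 \<le> w"
    proof (cases w)
      case (real r) then show ?thesis using w zero[of r] by (auto simp: psi_ext_def)
    qed (use w in auto)
  qed
  then show ?thesis using that z0pos z0Z zero Z_def by auto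
qed

lemma pseudo_inv_P1:
  assumes g: "archimedean_generator psi" and "0 \<le> t" "t \<le> 1" "0 \<le> z"
  shows "psi z \<le> t \<longleftrightarrow> pseudo_inv psi t \<le> ereal z"
proof (cases "t > 0")
  case True
  then obtain w where w: "w \<ge> 0" "psi w = t" using gen_exists[OF g] assms by blast
  have pw: "pseudo_inv psi t = ereal w" using pseudo_inv_pos[OF g True assms(3) w] .
  show ?thesis
  proof
    assume "psi z \<le> t"
    show "pseudo_inv psi t \<le> ereal z"
    proof (rule ccontr)
      assume "\<not> ?thesis"
      then have "z < w" using pw by auto
      then have "psi w < psi z" using gen_strict[OF g, of z w] assms w True by auto
      then show False using \<open>psi z \<le> t\<close> w by auto
    qed
  next
    assume "pseudo_inv psi t \<le> ereal z"
    then have "w \<le> z" using pw by auto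
    then show "psi z \<le> t" using gen_anti[OF g, of w z] w by auto
  qed
next
  case False
  then have t0: "t = 0" using assms by auto
  show ?thesis
  proof (cases "\<exists>z\<ge>0. psi z = 0")
    case True
    then obtain z0 where "z0 > 0" "psi z0 = 0" "\<And>z. z \<ge> 0 \<Longrightarrow> psi z = 0 \<longleftrightarrow> z0 \<le> z"
      "pseudo_inv psi 0 = ereal z0" using pseudo_inv_nonstrict0[OF g] by metis
    then show ?thesis using t0 assms gen_range[OF g, of z] by auto
  next
    case False
    then have "pseudo_inv psi 0 = \<infinity>" using pseudo_inv_strict0 by blast
    then show ?thesis using t0 False assms gen_range[OF g, of z] by force
  qed
qed

lemma pseudo_inv_P2:
  assumes g: "archimedean_generator psi" and "0 \<le> z" "ereal z \<le> pseudo_inv psi 0"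
  shows "pseudo_inv psi (psi z) = ereal z"
proof (cases "psi z > 0")
  case True
  then show ?thesis using pseudo_inv_pos[OF g True _ assms(2)] gen_range[OF g assms(2)] by auto
next
  case False
  then have z: "psi z = 0" using gen_range[OF g assms(2)] by auto
  then obtain z0 where "z0 > 0" "psi z0 = 0" "\<And>z. z \<ge> 0 \<Longrightarrow> psi z = 0 \<longleftrightarrow> z0 \<le> z"
      "pseudo_inv psi 0 = ereal z0" using pseudo_inv_nonstrict0[OF g] assms(2) by metis
  then have "z = z0" using z assms by force
  then show ?thesis using z \<open>pseudo_inv psi 0 = ereal z0\<close> by simp
qed

lemma pseudo_inv_out: "y < 0 \<or> y > 1 \<Longrightarrow> archimedean_generator psi \<Longrightarrow> pseudo_inv psi y = \<infinity>"
proof -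
  assume y: "y < 0 \<or> y > 1" and g: "archimedean_generator psi"
  have h: "{w :: ereal. 0 \<le> w \<and> psi_ext psi w = y} = {}"
  proof (intro set_eqI iffI)
    fix w assume w: "w \<in> {w :: ereal. 0 \<le> w \<and> psi_ext psi w = y}"
    show "w \<in> {}"
    proof (cases w)
      case (real r) then show ?thesis using w y gen_range[OF g, of r] by (auto simp: psi_ext_def)
    qed (use w y in \<open>auto simp: psi_ext_def\<close>)
  qed auto
  show ?thesis unfolding pseudo_inv_def h by (simp add: top_ereal_def)
qed

lemma pseudo_inv_anti:
  assumes g: "archimedean_generator psi" and "0 \<le> y1" "y1 \<le> y2" "y2 \<le> 1"
  shows "pseudo_inv psi y2 \<le> pseudo_inv psi y1"
proof (cases "y1 > 0")
  case True
  then obtain w where w: "w \<ge> 0" "psi w = y1" using gen_exists[OF g] assms by fastforce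
  then have "pseudo_inv psi y1 = ereal w" using pseudo_inv_pos[OF g True] assms by auto
  moreover have "pseudo_inv psi y2 \<le> ereal w"
    using pseudo_inv_P1[OF g, of y2 w] w assms by auto
  ultimately show ?thesis by simp
next
  case False
  then have y1: "y1 = 0" using assms by auto
  show ?thesis
  proof (cases "\<exists>z\<ge>0. psi z = 0")
    case True
    then obtain z0 where "z0 > 0" "psi z0 = 0" "\<And>z. z \<ge> 0 \<Longrightarrow> psi z = 0 \<longleftrightarrow> z0 \<le> z"
      "pseudo_inv psi 0 = ereal z0" using pseudo_inv_nonstrict0[OF g] by metis
    then have "psi z0 \<le> y2" using assms by linarith
    then have "pseudo_inv psi y2 \<le> ereal z0" using pseudo_inv_P1[OF g, of y2 z0] assms \<open>z0 > 0\<close> by auto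
    then show ?thesis using y1 \<open>pseudo_inv psi 0 = ereal z0\<close> by simp
  next
    case False
    then show ?thesis using pseudo_inv_strict0 y1 by auto
  qed
qed

lemma psf_lborel: "product_sigma_finite (\<lambda>_. lborel)"
  by (simp add: product_sigma_finite_def lborel.sigma_finite_measure_axioms)

definition sset :: "'a set \<Rightarrow> ('a \<Rightarrow> real) \<Rightarrow> real \<Rightarrow> ('a \<Rightarrow> real) set" where
  "sset J b r = {y \<in> space (PiM J (\<lambda>_. lborel)). (\<forall>j\<in>J. b j \<le> y j) \<and> (\<Sum>j\<in>J. y j) \<le> r}"

lemma sset_sets[measurable]: "finite J \<Longrightarrow> sset J b r \<in> sets (PiM J (\<lambda>_. lborel))"
  unfolding sset_def by measurable

lemma simplex_vol:
  fixes J :: "'a set"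
  assumes "finite J"
  shows "emeasure (PiM J (\<lambda>_. lborel)) (sset J b r) =
    ennreal (if (\<Sum>j\<in>J. b j) \<le> r then (r - (\<Sum>j\<in>J. b j))^card J / fact (card J) else 0)"
  using assms
proof (induction J arbitrary: r rule: finite_induct)
  case empty
  show ?case by (simp add: sset_def PiM_empty)
next
  case (insert i J)
  interpret product_sigma_finite "\<lambda>_. lborel" by (rule psf_lborel)
  define k where "k = card J"
  define c where "c = r - (\<Sum>j\<in>J. b j)"
  have "emeasure (PiM (insert i J) (\<lambda>_. lborel)) (sset (insert i J) b r) =
     (\<integral>\<^sup>+ z. indicator (sset (insert i J) b r) z \<partial>PiM (insert i J) (\<lambda>_. lborel))"
    using insert by simp
  also have "\<dots> = (\<integral>\<^sup>+ y. (\<integral>\<^sup>+ x. indicator (sset (insert i J) b r) (x(i := y)) \<partial>PiM J (\<lambda>_. lborel)) \<partial>lborel)"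
    by (rule product_nn_integral_insert_rev) (use insert in auto)
  also have "\<dots> = (\<integral>\<^sup>+ y. (\<integral>\<^sup>+ x. indicator {b i..} y * indicator (sset J b (r - y)) x \<partial>PiM J (\<lambda>_. lborel)) \<partial>lborel)"
  proof (intro nn_integral_cong)
    fix y x assume x: "x \<in> space (PiM J (\<lambda>_. lborel :: real measure))"
    have "(\<Sum>j\<in>insert i J. (x(i := y)) j) = y + (\<Sum>j\<in>J. x j)"
    proof -
      have "(\<Sum>j\<in>J. (x(i := y)) j) = (\<Sum>j\<in>J. x j)"
        by (rule sum.cong) (use insert in auto)
      then show ?thesis using insert by simp
    qed
    moreover have "x(i := y) \<in> space (PiM (insert i J) (\<lambda>_. lborel))"
      using x by (auto simp: space_PiM PiE_def extensional_def)
    ultimately show "indicator (sset (insert i J) b r) (x(i := y)) = (indicator {b i..} y * indicator (sset J b (r - y)) x :: ennreal)"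
      using x insert by (auto simp: sset_def indicator_def)
  qed
  also have "\<dots> = (\<integral>\<^sup>+ y. indicator {b i..} y * ennreal (if (\<Sum>j\<in>J. b j) \<le> r - y then (r - y - (\<Sum>j\<in>J. b j))^k / fact k else 0) \<partial>lborel)"
    unfolding k_def using insert by (simp add: nn_integral_cmult_indicator)
  also have "\<dots> = (\<integral>\<^sup>+ y. ennreal ((c - y)^k / fact k) * indicator {b i..c} y \<partial>lborel)"
    by (intro nn_integral_cong) (auto simp: indicator_def c_def algebra_simps)
  also have "\<dots> = ennreal (if (\<Sum>j\<in>insert i J. b j) \<le> r then (r - (\<Sum>j\<in>insert i J. b j))^card (insert i J) / fact (card (insert i J)) else 0)"
  proof (cases "b i \<le> c")
    case True
    define F where "F = (\<lambda>y::real. 0 - (c - y)^(Suc k) / fact (Suc k))"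
    have "(\<integral>\<^sup>+ y. ennreal ((c - y)^k / fact k) * indicator {b i..c} y \<partial>lborel) =
        ennreal (F c - F (b i))"
    proof (rule nn_integral_FTC_Icc)
      show "(\<lambda>y. (c - y)^k / fact k) \<in> borel_measurable borel" by measurable
      fix x assume "x \<in> {b i..c}"
      show "0 \<le> (c - x)^k / fact k" using \<open>x \<in> {b i..c}\<close> by auto
      have "((\<lambda>y. (c - y)^(Suc k)) has_real_derivative (real (Suc k) * (c - x)^k * (0 - 1))) (at x)"
        apply (rule derivative_eq_intros refl)+
        apply (cases k) apply (auto simp: algebra_simps)
        done
      then have "(F has_real_derivative (0 - real (Suc k) * (c - x)^k * (0 - 1) / fact (Suc k))) (at x)"
        unfolding F_def by (intro DERIV_diff DERIV_const DERIV_cdivide)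
      moreover have "0 - real (Suc k) * (c - x)^k * (0 - 1) / fact (Suc k) = (c - x)^k / fact k"
        by (simp add: fact_Suc del: of_nat_Suc)
      ultimately show "(F has_real_derivative (c - x)^k / fact k) (at x)" by simp
    qed (use True in auto)
    also have "\<dots> = ennreal ((c - b i)^(Suc k) / fact (Suc k))" by (simp add: F_def)
    finally show ?thesis using True insert by (simp add: c_def k_def algebra_simps)
  next
    case False
    then show ?thesis using insert by (simp add: c_def algebra_simps)
  qed
  finally show ?case .
qed

lemma measurable_vec_lambda[measurable]:
  assumes "\<And>i. (\<lambda>x. g i x) \<in> borel_measurable M"
  shows "(\<lambda>x. \<chi> i. g i x :: real^'n::finite) \<in> borel_measurable M"
proof (subst borel_measurable_euclidean_space, intro ballI)
  fix b :: "real^'n" assume "b \<in> Basis"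
  then obtain i where b: "b = axis i 1" by (auto simp: Basis_vec_def)
  have "(\<lambda>x. (\<chi> i. g i x) \<bullet> b) = g i" unfolding b
    by (rule ext) (simp add: inner_axis)
  then show "(\<lambda>x. (\<chi> i. g i x) \<bullet> b) \<in> borel_measurable M" using assms by simp
qed

lemma measurable_vec_nth[measurable]:
  "(\<lambda>x::real^'n::finite. x $ i) \<in> borel_measurable borel"
  by (rule borel_measurable_continuous_onI) (intro continuous_intros)

lemma test: "{u :: real^'n::finite. \<forall>i. 0 \<le> u $ i \<and> u $ i \<le> 1} \<in> sets borel"
  by measurable

lemma upset_borel:
  fixes S :: "real set"
  assumes sub: "S \<subseteq> {0..1}" and up: "\<And>x y. x \<in> S \<Longrightarrow> x \<le> y \<Longrightarrow> y \<le> 1 \<Longrightarrow> y \<in> S"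
  shows "S \<in> sets borel"
proof (cases "S = {}")
  case False
  define c where "c = Inf S"
  have bdd: "bdd_below S" using sub by (intro bdd_belowI[of _ 0]) auto
  have "S = {c<..1} \<union> (if c \<in> S then {c} else {})"
  proof (intro set_eqI iffI)
    fix x assume x: "x \<in> S"
    then have "c \<le> x" using bdd by (simp add: c_def cInf_lower)
    then show "x \<in> {c<..1} \<union> (if c \<in> S then {c} else {})" using x sub by (cases "x = c") auto
  next
    fix x assume x: "x \<in> {c<..1} \<union> (if c \<in> S then {c} else {})"
    show "x \<in> S"
    proof (cases "x = c")
      case True then show ?thesis using x by (auto split: if_splits)
    next
      case False
      then have "c < x" "x \<le> 1" using x by (auto split: if_splits)
      then obtain y where "y \<in> S" "y < x" using cInf_less_iff[OF \<open>S \<noteq> {}\<close> bdd] c_def by auto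
      then show ?thesis using up \<open>x \<le> 1\<close> by auto
    qed
  qed
  also have "\<dots> \<in> sets borel" by auto
  finally show ?thesis .
qed simp

lemma pseudo_inv_measurable[measurable]:
  assumes g: "archimedean_generator psi"
  shows "pseudo_inv psi \<in> borel_measurable borel"
proof (rule borel_measurableI_less)
  fix a :: ereal
  have "{x. pseudo_inv psi x < a} \<in> sets borel"
  proof (rule upset_borel)
    show "{x. pseudo_inv psi x < a} \<subseteq> {0..1}"
      using pseudo_inv_out[OF _ g] by (force simp: not_le)
  next
    fix x y assume "x \<in> {x. pseudo_inv psi x < a}" "x \<le> y" "y \<le> 1"
    moreover have "0 \<le> x" using calculation pseudo_inv_out[OF _ g, of x] by force
    ultimately show "y \<in> {x. pseudo_inv psi x < a}"
      using pseudo_inv_anti[OF g, of x y] by auto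
  qed
  then show "{x \<in> space borel. pseudo_inv psi x < a} \<in> sets borel" by simp
qed

definition psi0 :: "(real \<Rightarrow> real) \<Rightarrow> real \<Rightarrow> real" where
  "psi0 psi x = psi (max 0 x)"

lemma psi0_cont: "archimedean_generator psi \<Longrightarrow> continuous_on UNIV (psi0 psi)"
  unfolding psi0_def
  by (rule continuous_on_compose2[OF gen_cont]) (auto intro!: continuous_intros)

lemma psi0_measurable[measurable]: "archimedean_generator psi \<Longrightarrow> psi0 psi \<in> borel_measurable borel"
  by (rule borel_measurable_continuous_onI[OF psi0_cont])

lemma psi_ext_eq: "0 \<le> z \<Longrightarrow> psi_ext psi z = (if z = \<infinity> then 0 else psi0 psi (real_of_ereal z))"
  unfolding psi_ext_def psi0_def by (cases z) auto

lemma arch_copula_eq: "arch_copula psi u =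
   (let z = (\<Sum>i\<in>UNIV. pseudo_inv psi (u $ i)) in if z = \<infinity> then 0 else psi0 psi (real_of_ereal z))"
  unfolding arch_copula_def Let_def
  by (rule psi_ext_eq) (simp add: sum_nonneg pseudo_inv_nonneg)

lemma arch_copula_measurable[measurable]:
  assumes g: "archimedean_generator psi"
  shows "(arch_copula psi :: real^'n::finite \<Rightarrow> real) \<in> borel_measurable borel"
  unfolding arch_copula_eq[abs_def] Let_def using g by measurable

lemma unit_cube_sets[measurable]: "unit_cube \<in> sets borel"
  unfolding unit_cube_def by measurable

lemma cube_reduce:
  fixes M :: "(real^'n::finite) measure"
  assumes "prob_space M" "sets M = sets borel" "emeasure M unit_cube = 1" "A \<in> sets borel"
  shows "emeasure M A = emeasure M (A \<inter> unit_cube)"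
proof -
  interpret prob_space M by fact
  have "AE x in M. x \<in> unit_cube"
    by (rule AE_prob_1) (simp add: measure_def assms)
  then show ?thesis
    by (intro emeasure_eq_AE) (auto simp: assms)
qed

lemma cube_measure_eq:
  fixes M N :: "(real^'n::finite) measure"
  assumes pM: "prob_space M" and pN: "prob_space N" and sM: "sets M = sets borel" and sN: "sets N = sets borel"
    and cM: "emeasure M unit_cube = 1" and cN: "emeasure N unit_cube = 1"
    and eq: "\<And>u. u \<in> unit_cube \<Longrightarrow> emeasure M {..u} = emeasure N {..u}"
  shows "M = N"
proof (rule measure_eqI_generator_eq[where \<Omega> = UNIV and E = "range atMost" and A = "\<lambda>i. {..(\<chi> _. real i)}"])
  show "Int_stable (range atMost :: (real^'n) set set)"
  proof (rule Int_stableI_image)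
    fix i j :: "real^'n"
    have "{..i} \<inter> {..j} = {..inf i j}" by auto
    then show "\<exists>k\<in>UNIV. {..i} \<inter> {..j} = {..k}" by blast
  qed
  show "range atMost \<subseteq> Pow (UNIV :: (real^'n) set)" by auto
  have sb: "sets (borel :: (real^'n) measure) = sigma_sets UNIV (range atMost)"
  proof -
    have "sets (borel :: (real^'n) measure) = sets (sigma UNIV (range atMost))"
      using borel_eq_atMost by metis
    also have "\<dots> = sigma_sets UNIV (range atMost)" by (rule sets_measure_of) auto
    finally show ?thesis .
  qed
  show "sets M = sigma_sets UNIV (range atMost)" using sM sb by simp
  show "sets N = sigma_sets UNIV (range atMost)" using sN sb by simp
  show "range (\<lambda>i. {..(\<chi> _. real i)}) \<subseteq> range (atMost :: real^'n \<Rightarrow> _)" by auto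
  show "(\<Union>i. {..(\<chi> _. real i) :: real^'n}) = UNIV"
  proof (intro set_eqI iffI)
    fix x :: "real^'n"
    obtain n :: nat where "Max (range (\<lambda>i. x $ i)) \<le> real n" using real_arch_simple by blast
    moreover have "x $ i \<le> Max (range (\<lambda>i. x $ i))" for i by (rule Max_ge) auto
    ultimately have "\<forall>i. x $ i \<le> real n" using order.trans by blast
    then show "x \<in> (\<Union>i. {..(\<chi> _. real i)})" by (auto simp: less_eq_vec_def)
  qed auto
  show "emeasure M {..(\<chi> _. real i)} \<noteq> \<infinity>" for i
  proof -
    interpret prob_space M by (rule pM)
    show ?thesis using emeasure_finite[of "{..(\<chi> _. real i)}"] by simp
  qed
  fix X assume "X \<in> range (atMost :: real^'n \<Rightarrow> _)"
  then obtain a where X: "X = {..a}" by auto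
  have red: "emeasure K A = emeasure K (A \<inter> unit_cube)" if "prob_space K" "sets K = sets borel" "emeasure K unit_cube = 1" "A \<in> sets borel" for K :: "(real^'n) measure" and A
    using cube_reduce[OF that] .
  show "emeasure M X = emeasure N X"
  proof (cases "\<exists>i. a $ i < 0")
    case True
    then obtain i where i: "a $ i < 0" by blast
    have e: "{..a} \<inter> unit_cube = {}"
    proof (intro equalityI subsetI)
      fix x assume "x \<in> {..a} \<inter> unit_cube"
      then have "x $ i \<le> a $ i" "0 \<le> x $ i" by (auto simp: unit_cube_def less_eq_vec_def)
      then show "x \<in> {}" using i by simp
    qed simp
    have "emeasure M X = 0" using red[OF pM sM cM, of "{..a}"] e X by simp
    moreover have "emeasure N X = 0" using red[OF pN sN cN, of "{..a}"] e X by simp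
    ultimately show ?thesis by simp
  next
    case False
    define v where "v = (\<chi> i. min (a $ i) 1)"
    have v: "v \<in> unit_cube" using False by (auto simp: v_def unit_cube_def not_less)
    have e: "{..a} \<inter> unit_cube = {..v} \<inter> unit_cube" by (auto simp: v_def unit_cube_def less_eq_vec_def)
    have "emeasure K {..a} = emeasure K {..v}" if "prob_space K" "sets K = sets borel" "emeasure K unit_cube = 1" for K :: "(real^'n) measure"
    proof -
      have "emeasure K {..a} = emeasure K ({..a} \<inter> unit_cube)" using red[OF that, of "{..a}"] by simp
      also have "\<dots> = emeasure K ({..v} \<inter> unit_cube)" using e by simp
      also have "\<dots> = emeasure K {..v}" using red[OF that, of "{..v}"] by simp
      finally show ?thesis .
    qed
    from this[OF pM sM cM] this[OF pN sN cN] eq[OF v] X show ?thesis by simp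
  qed
qed

locale arch_setup =
  fixes psi :: "real \<Rightarrow> real" and \<gamma> :: "real measure" and i0 :: "'n::finite"
  assumes d3: "CARD('n) \<ge> 3" and gen: "archimedean_generator psi"
    and will: "williamson_measure CARD('n) psi \<gamma>"
begin

definition "J = (UNIV :: 'n set) - {i0}"
definition "m = card J"
definition "Dl = sset J (\<lambda>_. 0) 1"
definition "P = density (PiM J (\<lambda>_. lborel)) (\<lambda>y. ennreal (fact m) * indicator Dl y)"
definition "sv y = (\<chi> i. if i = i0 then 1 - (\<Sum>j\<in>J. y j) else y i)"
definition "FF = (\<lambda>(t, y). \<chi> i. psi0 psi (sv y $ i / t))"
definition "MM = distr (\<gamma> \<Otimes>\<^sub>M P) borel FF"

lemma finJ[simp]: "finite J" by (simp add: J_def)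
lemma m_eq: "m = CARD('n) - 1" unfolding m_def J_def by (simp add: card_Diff_singleton)
lemma m_ge: "m \<ge> 2" using d3 m_eq by simp

lemma wp: shows g_prob: "prob_space \<gamma>" and g_sets[measurable_cong]: "sets \<gamma> = sets borel"
  and g_neg: "emeasure \<gamma> {..<0} = 0" and g_zero: "emeasure \<gamma> {0} = 0"
  and g_repr: "\<And>z. z > 0 \<Longrightarrow> psi z = (\<integral>t. (max 0 (1 - t * z)) ^ m \<partial>\<gamma>)"
  using will unfolding williamson_measure_def m_eq by auto

lemma g_space[simp]: "space \<gamma> = UNIV" using sets_eq_imp_space_eq[OF g_sets] by simp

lemma Dl_sets[measurable]: "Dl \<in> sets (PiM J (\<lambda>_. lborel))" unfolding Dl_def by simp

lemma P_sets[measurable_cong]: "sets P = sets (PiM J (\<lambda>_. lborel))" by (simp add: P_def)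
lemma P_space: "space P = space (PiM J (\<lambda>_. lborel))" by (simp add: P_def)

lemma emeasure_P: "A \<in> sets (PiM J (\<lambda>_. lborel)) \<Longrightarrow>
   emeasure P A = ennreal (fact m) * emeasure (PiM J (\<lambda>_. lborel)) (Dl \<inter> A)"
  unfolding P_def
  by (subst emeasure_density) (auto simp: nn_integral_cmult indicator_inter_arith mult.assoc
        intro!: arg_cong2[where f="(*)"] simp flip: nn_integral_indicator)

lemma Dl_vol: "emeasure (PiM J (\<lambda>_. lborel)) Dl = ennreal (1 / fact m)"
  unfolding Dl_def by (subst simplex_vol) (auto simp: m_def)

lemma P_prob: "prob_space P"
proof
  have "emeasure P (space P) = ennreal (fact m) * emeasure (PiM J (\<lambda>_. lborel)) Dl"
    using emeasure_P[of "space (PiM J (\<lambda>_. lborel))"] sets.sets_into_space[OF Dl_sets]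
    by (simp add: P_space Int_absorb2)
  also have "\<dots> = 1" using Dl_vol by (simp flip: ennreal_mult)
  finally show "emeasure P (space P) = 1" .
qed

lemma AE_P: "AE y in P. y \<in> Dl"
  unfolding P_def by (subst AE_density) (auto simp: indicator_def)

lemma sv_props: assumes "y \<in> Dl" shows "\<And>i. 0 \<le> sv y $ i" and "(\<Sum>i\<in>UNIV. sv y $ i) = 1"
proof -
  have y: "\<And>j. j \<in> J \<Longrightarrow> 0 \<le> y j" "(\<Sum>j\<in>J. y j) \<le> 1" using assms by (auto simp: Dl_def sset_def)
  show "\<And>i. 0 \<le> sv y $ i" using y by (auto simp: sv_def J_def)
  have "(\<Sum>i\<in>UNIV. sv y $ i) = sv y $ i0 + (\<Sum>i\<in>J. sv y $ i)"
    unfolding J_def by (simp add: sum.remove)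
  also have "(\<Sum>i\<in>J. sv y $ i) = (\<Sum>j\<in>J. y j)" by (rule sum.cong) (auto simp: sv_def J_def)
  finally show "(\<Sum>i\<in>UNIV. sv y $ i) = 1" by (simp add: sv_def)
qed

lemma AE_g_pos: "AE t in \<gamma>. 0 < t"
proof (rule AE_I')
  have "{..<0} \<in> null_sets \<gamma>" "{0} \<in> null_sets \<gamma>" using g_neg g_zero by (auto simp: g_sets intro!: null_setsI)
  then have "{..<0} \<union> {0} \<in> null_sets \<gamma>" by (rule null_sets.Un)
  then show "{..0::real} \<in> null_sets \<gamma>" by (metis ivl_disj_un_singleton(2))
qed auto

lemma integrable_w: assumes A: "0 \<le> A" shows "integrable \<gamma> (\<lambda>t. (max 0 (1 - t * A)) ^ m)"
proof -
  interpret prob_space \<gamma> by (rule g_prob)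
  show ?thesis
  proof (rule integrable_const_bound[where B=1])
  show "AE t in \<gamma>. norm ((max 0 (1 - t * A)) ^ m) \<le> 1"
    using AE_g_pos
  proof eventually_elim
    case (elim t)
    then have "0 \<le> max 0 (1 - t * A)" "max 0 (1 - t * A) \<le> 1" using A by auto
    then show ?case by (simp add: power_le_one)
  qed
  qed simp
qed

lemma psi_nn: assumes "0 \<le> A"
  shows "ennreal (psi A) = (\<integral>\<^sup>+ t. ennreal ((max 0 (1 - t * A)) ^ m) \<partial>\<gamma>)"
proof (cases "A = 0")
  case True
  then show ?thesis using gen_0[OF gen] prob_space.emeasure_space_1[OF g_prob] by simp
next
  case False
  then have "A > 0" using assms by simp
  then show ?thesis using g_repr[OF \<open>A > 0\<close>]
    by (subst nn_integral_eq_integral[OF integrable_w[OF assms]]) auto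
qed

lemma AE_support:
  assumes "z0 > 0" "psi z0 = 0"
  shows "AE t in \<gamma>. 1 \<le> t * z0"
proof -
  have "(\<integral>t. (max 0 (1 - t * z0)) ^ m \<partial>\<gamma>) = 0" using g_repr[OF assms(1)] assms(2) by simp
  then have "AE t in \<gamma>. (max 0 (1 - t * z0)) ^ m = 0"
    using integral_nonneg_eq_0_iff_AE[OF integrable_w] assms(1) by auto
  then show ?thesis
  proof eventually_elim
    case (elim t)
    then have "max 0 (1 - t * z0) = 0" using m_ge by simp
    then show ?case by simp
  qed
qed

lemma psi0_m[measurable]: "psi0 psi \<in> borel_measurable borel"
  using psi0_measurable[OF gen] .

lemma sv_meas[measurable]: "(\<lambda>y. sv y $ i) \<in> borel_measurable (PiM J (\<lambda>_. lborel))"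
proof (cases "i = i0")
  case True
  then show ?thesis by (simp add: sv_def)
next
  case False
  then have "i \<in> J" by (simp add: J_def)
  then show ?thesis using False by (simp add: sv_def)
qed

lemma FF_meas[measurable]: "FF \<in> borel_measurable (\<gamma> \<Otimes>\<^sub>M P)"
proof -
  have "(\<lambda>x. psi0 psi (sv (snd x) $ i / fst x)) \<in> borel_measurable (\<gamma> \<Otimes>\<^sub>M P)" for i
    by measurable
  then show ?thesis unfolding FF_def by (simp add: case_prod_beta')
qed

lemma psi0_range: "0 \<le> psi0 psi x \<and> psi0 psi x \<le> 1"
  unfolding psi0_def using gen_range[OF gen, of "max 0 x"] by simp

lemma FF_cube: "FF x \<in> unit_cube"
  using psi0_range by (auto simp: FF_def unit_cube_def case_prod_beta')

lemma MM_prob: "prob_space MM"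
  unfolding MM_def
  by (rule prob_space.prob_space_distr[OF prob_space_pair[OF g_prob P_prob] FF_meas])

lemma MM_sets: "sets MM = sets borel" by (simp add: MM_def)

lemma MM_cube: "emeasure MM unit_cube = 1"
proof -
  have "emeasure MM unit_cube = emeasure (\<gamma> \<Otimes>\<^sub>M P) (space (\<gamma> \<Otimes>\<^sub>M P))"
  proof -
    have "FF -` unit_cube \<inter> space (\<gamma> \<Otimes>\<^sub>M P) = space (\<gamma> \<Otimes>\<^sub>M P)" using FF_cube by auto
    then show ?thesis unfolding MM_def by (subst emeasure_distr) auto
  qed
  then show ?thesis using prob_space.emeasure_space_1[OF prob_space_pair[OF g_prob P_prob]] by simp
qed

lemma MM_emeasure: assumes "X \<in> sets borel"
  shows "emeasure MM X = (\<integral>\<^sup>+ t. emeasure P {y \<in> space P. FF (t, y) \<in> X} \<partial>\<gamma>)"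
proof -
  interpret P: prob_space P by (rule P_prob)
  have "emeasure MM X = emeasure (\<gamma> \<Otimes>\<^sub>M P) (FF -` X \<inter> space (\<gamma> \<Otimes>\<^sub>M P))"
    unfolding MM_def using assms by (subst emeasure_distr) auto
  also have "\<dots> = (\<integral>\<^sup>+ t. emeasure P (Pair t -` (FF -` X \<inter> space (\<gamma> \<Otimes>\<^sub>M P))) \<partial>\<gamma>)"
    using assms by (subst P.emeasure_pair_measure_alt) auto
  also have "\<dots> = (\<integral>\<^sup>+ t. emeasure P {y \<in> space P. FF (t, y) \<in> X} \<partial>\<gamma>)"
    by (intro nn_integral_cong arg_cong[where f="emeasure P"]) (auto simp: space_pair_measure)
  finally show ?thesis .
qed

lemma FF_comp:
  assumes "t > 0" "y \<in> Dl" "0 \<le> c" "c \<le> 1"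
  shows "FF (t, y) $ i \<le> c \<longleftrightarrow> pseudo_inv psi c \<le> ereal (sv y $ i / t)"
proof -
  have "0 \<le> sv y $ i / t" using sv_props(1)[OF assms(2)] assms(1) by simp
  then have "FF (t, y) $ i = psi (sv y $ i / t)" by (simp add: FF_def psi0_def)
  then show ?thesis using pseudo_inv_P1[OF gen assms(3,4) \<open>0 \<le> sv y $ i / t\<close>] by simp
qed

definition "G u t = (if \<exists>i. pseudo_inv psi (u $ i) = \<infinity> then 0
   else (max 0 (1 - t * (\<Sum>i\<in>UNIV. real_of_ereal (pseudo_inv psi (u $ i))))) ^ m)"

lemma cube_le: "u \<in> unit_cube \<Longrightarrow> 0 \<le> u $ i \<and> u $ i \<le> 1" by (simp add: unit_cube_def)

lemma P_box:
  assumes t: "t > 0" and u: "u \<in> unit_cube"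
  shows "emeasure P {y \<in> space P. FF (t, y) \<le> u} = ennreal (G u t)"
proof -
  interpret P: prob_space P by (rule P_prob)
  define a where "a i = pseudo_inv psi (u $ i)" for i
  have sm: "{y \<in> space P. FF (t, y) \<le> u} \<in> sets P" by measurable
  show ?thesis
  proof (cases "\<exists>i. a i = \<infinity>")
    case True
    then obtain i where i: "a i = \<infinity>" by blast
    have "AE y in P. y \<in> {y \<in> space P. FF (t, y) \<le> u} \<longleftrightarrow> y \<in> {}"
      using AE_P
    proof eventually_elim
      case (elim y)
      have "\<not> FF (t, y) $ i \<le> u $ i" using FF_comp[OF t elim cube_le[OF u, THEN conjunct1] cube_le[OF u, THEN conjunct2]] i a_def by simp
      then show ?case by (auto simp: less_eq_vec_def)
    qed
    then have "emeasure P {y \<in> space P. FF (t, y) \<le> u} = emeasure P {}"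
      by (rule emeasure_eq_AE) (use sm in auto)
    then show ?thesis using True by (simp add: G_def a_def)
  next
    case False
    define r where "r i = real_of_ereal (a i)" for i
    have ar: "a i = ereal (r i)" "0 \<le> r i" for i
      using False pseudo_inv_nonneg[of psi "u $ i"] unfolding r_def a_def
      by (cases "a i"; auto simp: a_def)+
    define b where "b i = t * r i" for i
    have b0: "0 \<le> b i" for i using ar t by (simp add: b_def)
    define B where "B = sset J b (1 - b i0)"
    have Bs: "B \<in> sets (PiM J (\<lambda>_. lborel))" unfolding B_def by simp
    have "AE y in P. y \<in> {y \<in> space P. FF (t, y) \<le> u} \<longleftrightarrow> y \<in> B"
      using AE_P
    proof eventually_elim
      case (elim y)
      have "FF (t, y) $ i \<le> u $ i \<longleftrightarrow> b i \<le> sv y $ i" for i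
        using FF_comp[OF t elim cube_le[OF u, THEN conjunct1] cube_le[OF u, THEN conjunct2]] ar t
        by (simp add: a_def b_def pos_le_divide_eq mult.commute)
      then have "FF (t, y) \<le> u \<longleftrightarrow> (\<forall>i. b i \<le> sv y $ i)" by (simp add: less_eq_vec_def)
      also have "\<dots> \<longleftrightarrow> (\<forall>j\<in>J. b j \<le> y j) \<and> b i0 \<le> 1 - (\<Sum>j\<in>J. y j)"
        by (auto simp: sv_def J_def)
      finally show ?case using elim by (auto simp: B_def sset_def Dl_def P_space)
    qed
    then have "emeasure P {y \<in> space P. FF (t, y) \<le> u} = emeasure P B"
      by (rule emeasure_eq_AE) (use sm Bs in auto)
    also have "\<dots> = ennreal (fact m) * emeasure (PiM J (\<lambda>_. lborel)) (Dl \<inter> B)"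
      using emeasure_P[OF Bs] .
    also have "Dl \<inter> B = B"
    proof -
      have "B \<subseteq> Dl"
      proof
        fix y assume "y \<in> B"
        then have "\<forall>j\<in>J. b j \<le> y j" "(\<Sum>j\<in>J. y j) \<le> 1 - b i0" "y \<in> space (PiM J (\<lambda>_. lborel))"
          by (auto simp: B_def sset_def)
        then show "y \<in> Dl" using b0[of i0] b0 unfolding Dl_def sset_def by (auto intro: order.trans)
      qed
      then show ?thesis by auto
    qed
    also have "emeasure (PiM J (\<lambda>_. lborel)) B = ennreal (if (\<Sum>j\<in>J. b j) \<le> 1 - b i0 then (1 - b i0 - (\<Sum>j\<in>J. b j))^m / fact m else 0)"
      unfolding B_def by (subst simplex_vol) (auto simp: m_def)
    also have "(\<Sum>i\<in>UNIV. b i) = b i0 + (\<Sum>j\<in>J. b j)"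
      unfolding J_def by (simp add: sum.remove)
    then have "ennreal (fact m) * ennreal (if (\<Sum>j\<in>J. b j) \<le> 1 - b i0 then (1 - b i0 - (\<Sum>j\<in>J. b j))^m / fact m else 0)
        = ennreal ((max 0 (1 - (\<Sum>i\<in>UNIV. b i))) ^ m)"
      using m_ge by (auto simp: max_def diff_diff_eq simp flip: ennreal_mult)
    also have "(\<Sum>i\<in>UNIV. b i) = t * (\<Sum>i\<in>UNIV. r i)" by (simp add: b_def sum_distrib_left)
    finally show ?thesis using False by (simp add: G_def a_def r_def)
  qed
qed

lemma MM_df: assumes u: "u \<in> unit_cube"
  shows "emeasure MM {..u} = ennreal (arch_copula psi u)"
proof -
  have "emeasure MM {..u} = (\<integral>\<^sup>+ t. emeasure P {y \<in> space P. FF (t, y) \<in> {..u}} \<partial>\<gamma>)"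
    by (rule MM_emeasure) simp
  also have "\<dots> = (\<integral>\<^sup>+ t. ennreal (G u t) \<partial>\<gamma>)"
    using AE_g_pos by (intro nn_integral_cong_AE) (auto elim!: eventually_mono simp: P_box[OF _ u])
  also have "\<dots> = ennreal (arch_copula psi u)"
  proof (cases "\<exists>i. pseudo_inv psi (u $ i) = \<infinity>")
    case True
    then have "(\<Sum>i\<in>UNIV. pseudo_inv psi (u $ i)) = \<infinity>" by (simp add: sum_Pinfty)
    then show ?thesis using True by (simp add: G_def arch_copula_def psi_ext_def)
  next
    case False
    define r where "r i = real_of_ereal (pseudo_inv psi (u $ i))" for i
    have ar: "pseudo_inv psi (u $ i) = ereal (r i)" "0 \<le> r i" for i
      using False pseudo_inv_nonneg[of psi "u $ i"] unfolding r_def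
      by (cases "pseudo_inv psi (u $ i)"; auto)+
    have "arch_copula psi u = psi (\<Sum>i\<in>UNIV. r i)"
      by (simp add: arch_copula_def psi_ext_def ar)
    moreover have "0 \<le> (\<Sum>i\<in>UNIV. r i)" using ar by (simp add: sum_nonneg)
    ultimately show ?thesis using psi_nn[of "\<Sum>i\<in>UNIV. r i"] False by (simp add: G_def r_def)
  qed
  finally show ?thesis .
qed

lemma MM_eq: assumes mu: "copula_measure (arch_copula psi) (\<mu> :: (real^'n) measure)"
  shows "MM = \<mu>"
proof (rule cube_measure_eq[OF MM_prob _ MM_sets _ MM_cube])
  show pm: "prob_space \<mu>" and sm: "sets \<mu> = sets borel" and "emeasure \<mu> unit_cube = 1"
    using mu by (auto simp: copula_measure_def)
  fix u :: "real^'n" assume u: "u \<in> unit_cube"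
  have "{x. \<forall>i. x $ i \<le> u $ i} = {..u}" by (auto simp: less_eq_vec_def)
  then have "measure \<mu> {..u} = arch_copula psi u" using mu u by (auto simp: copula_measure_def)
  then have "emeasure \<mu> {..u} = ennreal (arch_copula psi u)"
  proof -
    interpret prob_space \<mu> by (rule pm)
    show ?thesis using \<open>measure \<mu> {..u} = arch_copula psi u\<close> by (simp add: emeasure_eq_measure)
  qed
  then show "emeasure MM {..u} = emeasure \<mu> {..u}" using MM_df[OF u] by simp
qed

lemma AE_phi0: "AE t in \<gamma>. ereal (1 / t) \<le> pseudo_inv psi 0"
proof (cases "\<exists>z\<ge>0. psi z = 0")
  case True
  then obtain z0 where z0: "z0 > 0" "psi z0 = 0" "pseudo_inv psi 0 = ereal z0"
    using pseudo_inv_nonstrict0[OF gen] by metis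
  show ?thesis using AE_support[OF z0(1,2)] AE_g_pos
  proof eventually_elim
    case (elim t)
    then show ?case using z0 by (simp add: divide_le_eq mult.commute)
  qed
next
  case False
  then have "pseudo_inv psi 0 = \<infinity>" using pseudo_inv_strict0 by blast
  then show ?thesis by simp
qed

lemma C_FF: assumes t: "t > 0" "ereal (1 / t) \<le> pseudo_inv psi 0" and y: "y \<in> Dl"
  shows "arch_copula psi (FF (t, y)) = psi (1 / t)"
proof -
  have s0: "0 \<le> sv y $ i" for i using sv_props(1)[OF y] .
  have s1: "sv y $ i \<le> 1" for i
  proof -
    have "sv y $ i \<le> (\<Sum>i\<in>UNIV. sv y $ i)" by (rule member_le_sum) (auto simp: s0)
    then show ?thesis using sv_props(2)[OF y] by simp
  qed
  have "pseudo_inv psi (FF (t, y) $ i) = ereal (sv y $ i / t)" for i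
  proof -
    have nn: "0 \<le> sv y $ i / t" using s0 t by simp
    have "sv y $ i / t \<le> 1 / t" using s1 t by (simp add: divide_right_mono)
    then have "ereal (sv y $ i / t) \<le> pseudo_inv psi 0" using t(2) by (meson ereal_less_eq(3) order.trans)
    moreover have "FF (t, y) $ i = psi (sv y $ i / t)" using nn by (simp add: FF_def psi0_def)
    ultimately show ?thesis using pseudo_inv_P2[OF gen nn] by simp
  qed
  then have "(\<Sum>i\<in>UNIV. pseudo_inv psi (FF (t, y) $ i)) = ereal ((\<Sum>i\<in>UNIV. sv y $ i) / t)"
    by (simp add: sum_divide_distrib)
  then show ?thesis using sv_props(2)[OF y] by (simp add: arch_copula_def psi_ext_def)
qed

lemma MM_level: assumes B: "B \<in> sets borel"
  shows "emeasure MM {u \<in> unit_cube. arch_copula psi u \<in> B} = emeasure \<gamma> {t. psi0 psi (1 / t) \<in> B}"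
proof -
  interpret P: prob_space P by (rule P_prob)
  have Ls: "{u \<in> unit_cube. arch_copula psi u \<in> B} \<in> sets borel"
    using B arch_copula_measurable[OF gen] by measurable
  have "emeasure MM {u \<in> unit_cube. arch_copula psi u \<in> B} =
      (\<integral>\<^sup>+ t. emeasure P {y \<in> space P. FF (t, y) \<in> {u \<in> unit_cube. arch_copula psi u \<in> B}} \<partial>\<gamma>)"
    by (rule MM_emeasure[OF Ls])
  also have "\<dots> = (\<integral>\<^sup>+ t. indicator {t. psi0 psi (1 / t) \<in> B} t \<partial>\<gamma>)"
  proof -
    have pt: "emeasure P {y \<in> space P. FF (t, y) \<in> {u \<in> unit_cube. arch_copula psi u \<in> B}} = indicator {t. psi0 psi (1 / t) \<in> B} t"
      if tt: "0 < t" "ereal (1 / t) \<le> pseudo_inv psi 0" for t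
    proof -
      have sm: "{y \<in> space P. FF (t, y) \<in> {u \<in> unit_cube. arch_copula psi u \<in> B}} \<in> sets P"
        using Ls by measurable
      have "AE y in P. y \<in> {y \<in> space P. FF (t, y) \<in> {u \<in> unit_cube. arch_copula psi u \<in> B}} \<longleftrightarrow>
          y \<in> (if psi0 psi (1 / t) \<in> B then space P else {})"
        using AE_P
      proof eventually_elim
        case (elim y)
        have "y \<in> space P" using elim sets.sets_into_space[OF Dl_sets] P_space by auto
        then show ?case using C_FF[OF tt elim] FF_cube tt(1) by (auto simp: psi0_def)
      qed
      then have "emeasure P {y \<in> space P. FF (t, y) \<in> {u \<in> unit_cube. arch_copula psi u \<in> B}} =
          emeasure P (if psi0 psi (1 / t) \<in> B then space P else {})"
        by (rule emeasure_eq_AE) (use sm in auto)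
      then show ?thesis using P.emeasure_space_1 by (auto simp: indicator_def)
    qed
    have "AE t in \<gamma>. 0 < t \<and> ereal (1 / t) \<le> pseudo_inv psi 0" using AE_g_pos AE_phi0 by eventually_elim auto
    then have "AE t in \<gamma>. emeasure P {y \<in> space P. FF (t, y) \<in> {u \<in> unit_cube. arch_copula psi u \<in> B}} = indicator {t. psi0 psi (1 / t) \<in> B} t"
      by (rule eventually_mono) (use pt in blast)
    then show ?thesis by (rule nn_integral_cong_AE)
  qed
  also have "\<dots> = emeasure \<gamma> {t. psi0 psi (1 / t) \<in> B}"
  proof -
    have "(\<lambda>x. psi0 psi (1 / x)) \<in> borel_measurable borel" by measurable
    then have "(\<lambda>x. psi0 psi (1 / x)) -` B \<inter> space borel \<in> sets borel" using B by (rule measurable_sets)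
    then have "{t. psi0 psi (1 / t) \<in> B} \<in> sets \<gamma>" by (simp add: g_sets vimage_def)
    then show ?thesis by (rule nn_integral_indicator)
  qed
  finally show ?thesis .
qed

end

lemma meas_AE_eq: "AE x in M. x \<in> A \<longleftrightarrow> x \<in> B \<Longrightarrow> A \<in> sets M \<Longrightarrow> B \<in> sets M \<Longrightarrow> measure M A = measure M B"
  unfolding measure_def by (subst emeasure_eq_AE) auto

lemma one_div_ereal0: "1 / ereal 0 = \<infinity>"
  by (simp add: divide_ereal_def)

lemma one_div_ereal: "z \<noteq> 0 \<Longrightarrow> 1 / ereal z = ereal (1 / z)"
  by (simp add: divide_ereal_def inverse_eq_divide)

lemma ereal_eq_sets[measurable]: "{x::real. ereal x = c} \<in> sets borel"
  by (cases c) auto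

lemma ereal_le_sets[measurable]: "{x::real. 0 \<le> x \<and> ereal x \<le> c} \<in> sets borel"
proof (cases c)
  case (real r)
  then show ?thesis by (simp add: Collect_conj_eq)
qed (auto simp: Collect_conj_eq)

theorem theorem5p5:
  fixes psi :: "real \<Rightarrow> real" and \<gamma> :: "real measure" and \<mu> :: "(real ^ 'n::finite) measure"
  assumes d3: "CARD('n) \<ge> 3"
    and gen: "archimedean_generator psi"
    and will: "williamson_measure CARD('n) psi \<gamma>"
    and mu: "copula_measure (arch_copula psi) \<mu>"
  shows "(\<forall>t\<in>{0<..1}. measure \<mu> (level_set (arch_copula psi) t)
             = measure \<gamma> {x. ereal x = 1 / pseudo_inv psi t})
     \<and> (pseudo_inv psi 0 = \<infinity> \<longrightarrow> measure \<mu> (level_set (arch_copula psi) 0) = 0)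
     \<and> (pseudo_inv psi 0 \<noteq> \<infinity> \<longrightarrow> measure \<mu> (level_set (arch_copula psi) 0)
             = measure \<gamma> {x. ereal x = 1 / pseudo_inv psi 0})
     \<and> (\<forall>t\<in>{0<..1}. kendall_df (arch_copula psi) \<mu> t
             = measure \<gamma> {x. 0 \<le> x \<and> ereal x \<le> 1 / pseudo_inv psi t})"
proof -
  interpret A: arch_setup psi \<gamma> "undefined :: 'n"
    by unfold_locales (use d3 gen will in auto)
  have MMeq: "A.MM = \<mu>" by (rule A.MM_eq[OF mu])
  have lev: "measure \<mu> {u \<in> unit_cube. arch_copula psi u \<in> B} = measure \<gamma> {t. psi0 psi (1 / t) \<in> B}"
    if "B \<in> sets borel" for B
    using A.MM_level[OF that] MMeq by (simp add: measure_def)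
  have sg: "{t. psi0 psi (1 / t) \<in> B} \<in> sets \<gamma>" if "B \<in> sets borel" for B
  proof -
    have "(\<lambda>x. psi0 psi (1 / x)) \<in> borel_measurable borel" using gen by measurable
    then have "(\<lambda>x. psi0 psi (1 / x)) -` B \<inter> space borel \<in> sets borel" using that by (rule measurable_sets)
    then show ?thesis by (simp add: A.g_sets vimage_def)
  qed
  have psi0_pos: "psi0 psi (1 / t) = psi (1 / t)" if "t > 0" for t using that by (simp add: psi0_def)
  have ls: "level_set (arch_copula psi) t0 = {u \<in> unit_cube. arch_copula psi u \<in> {t0}}" for t0
    by (simp add: level_set_def)
  have ks: "kendall_df (arch_copula psi) \<mu> t0 = measure \<mu> {u \<in> unit_cube. arch_copula psi u \<in> {..t0}}" for t0
    by (simp add: kendall_df_def)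
  have c1: "measure \<mu> (level_set (arch_copula psi) t0) = measure \<gamma> {x. ereal x = 1 / pseudo_inv psi t0}"
    if t0: "t0 \<in> {0<..1}" for t0
  proof -
    obtain z where z: "z \<ge> 0" "psi z = t0" using gen_exists[OF gen] t0 by force
    have pz: "pseudo_inv psi t0 = ereal z" using pseudo_inv_pos[OF gen _ _ z] t0 by auto
    have "measure \<gamma> {t. psi0 psi (1 / t) \<in> {t0}} = measure \<gamma> {x. ereal x = 1 / pseudo_inv psi t0}"
    proof (rule meas_AE_eq)
      show "AE x in \<gamma>. x \<in> {t. psi0 psi (1 / t) \<in> {t0}} \<longleftrightarrow> x \<in> {x. ereal x = 1 / pseudo_inv psi t0}"
        using A.AE_g_pos
      proof eventually_elim
        case (elim t)
        have "psi (1 / t) = t0 \<longleftrightarrow> 1 / t = z"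
          using gen_uniq[OF gen, of "1 / t" z] z t0 elim by auto
        moreover have "1 / t = z \<longleftrightarrow> ereal t = 1 / ereal z"
        proof (cases "z = 0")
          case True then show ?thesis using elim by (simp add: one_div_ereal0)
        next
          case False then show ?thesis using elim z by (auto simp: one_div_ereal field_simps)
        qed
        ultimately show ?case using psi0_pos[OF elim] pz by simp
      qed
    qed (use sg in \<open>auto simp: A.g_sets\<close>)
    then show ?thesis using lev[of "{t0}"] by (simp add: level_set_def)
  qed
  have c2: "measure \<mu> (level_set (arch_copula psi) 0) = 0" if "pseudo_inv psi 0 = \<infinity>"
  proof -
    have nz: "psi z \<noteq> 0" if "z \<ge> 0" for z
    proof
      assume "psi z = 0"
      then obtain z0 where "pseudo_inv psi 0 = ereal z0" using pseudo_inv_nonstrict0[OF gen] \<open>z \<ge> 0\<close> by metis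
      then show False using \<open>pseudo_inv psi 0 = \<infinity>\<close> by simp
    qed
    have "measure \<gamma> {t. psi0 psi (1 / t) \<in> {0}} = measure \<gamma> {}"
    proof (rule meas_AE_eq)
      show "AE x in \<gamma>. x \<in> {t. psi0 psi (1 / t) \<in> {0}} \<longleftrightarrow> x \<in> {}"
        using A.AE_g_pos by eventually_elim (use nz psi0_pos in auto)
    qed (use sg in \<open>auto simp: A.g_sets\<close>)
    then show ?thesis using lev[of "{0}"] by (simp add: level_set_def)
  qed
  have c3: "measure \<mu> (level_set (arch_copula psi) 0) = measure \<gamma> {x. ereal x = 1 / pseudo_inv psi 0}"
    if ne: "pseudo_inv psi 0 \<noteq> \<infinity>"
  proof -
    have "\<exists>z\<ge>0. psi z = 0" using pseudo_inv_strict0[of psi] ne by auto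
    then obtain z0 where z0: "z0 > 0" "psi z0 = 0" "\<And>z. z \<ge> 0 \<Longrightarrow> psi z = 0 \<longleftrightarrow> z0 \<le> z"
      "pseudo_inv psi 0 = ereal z0" using pseudo_inv_nonstrict0[OF gen] by metis
    have "measure \<gamma> {t. psi0 psi (1 / t) \<in> {0}} = measure \<gamma> {x. ereal x = 1 / pseudo_inv psi 0}"
    proof (rule meas_AE_eq)
      show "AE x in \<gamma>. x \<in> {t. psi0 psi (1 / t) \<in> {0}} \<longleftrightarrow> x \<in> {x. ereal x = 1 / pseudo_inv psi 0}"
        using A.AE_g_pos A.AE_support[OF z0(1,2)]
      proof eventually_elim
        case (elim t)
        have "psi (1 / t) = 0 \<longleftrightarrow> z0 \<le> 1 / t" using z0(3)[of "1 / t"] elim by simp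
        also have "\<dots> \<longleftrightarrow> t = 1 / z0" using elim z0(1) by (auto simp: field_simps)
        finally show ?case using psi0_pos[OF elim(1)] z0(1,4) by (simp add: one_div_ereal)
      qed
    qed (use sg in \<open>auto simp: A.g_sets\<close>)
    then show ?thesis using lev[of "{0}"] by (simp add: level_set_def)
  qed
  have c4: "kendall_df (arch_copula psi) \<mu> t0 = measure \<gamma> {x. 0 \<le> x \<and> ereal x \<le> 1 / pseudo_inv psi t0}"
    if t0: "t0 \<in> {0<..1}" for t0
  proof -
    obtain z where z: "z \<ge> 0" "psi z = t0" using gen_exists[OF gen] t0 by force
    have pz: "pseudo_inv psi t0 = ereal z" using pseudo_inv_pos[OF gen _ _ z] t0 by auto
    have "measure \<gamma> {t. psi0 psi (1 / t) \<in> {..t0}} = measure \<gamma> {x. 0 \<le> x \<and> ereal x \<le> 1 / pseudo_inv psi t0}"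
    proof (rule meas_AE_eq)
      show "AE x in \<gamma>. x \<in> {t. psi0 psi (1 / t) \<in> {..t0}} \<longleftrightarrow> x \<in> {x. 0 \<le> x \<and> ereal x \<le> 1 / pseudo_inv psi t0}"
        using A.AE_g_pos
      proof eventually_elim
        case (elim t)
        have "psi (1 / t) \<le> t0 \<longleftrightarrow> z \<le> 1 / t"
          using pseudo_inv_P1[OF gen, of t0 "1 / t"] pz t0 elim by auto
        moreover have "z \<le> 1 / t \<longleftrightarrow> ereal t \<le> 1 / ereal z"
        proof (cases "z = 0")
          case True then show ?thesis using elim by (simp add: one_div_ereal0)
        next
          case False then show ?thesis using elim z by (auto simp: one_div_ereal field_simps)
        qed
        ultimately show ?case using psi0_pos[OF elim] pz elim by simp
      qed
    qed (use sg in \<open>auto simp: A.g_sets\<close>)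
    then show ?thesis using lev[of "{..t0}"] by (simp add: kendall_df_def)
  qed
  show ?thesis using c1 c2 c3 c4 by blast
qed

end
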